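(* Let $\pi_0,\dots,\pi_{T-1}$ be a connection schedule on $[N]$ with virtual topology $G$, let $a\in[N]$, $t\in\mathbb Z$, and let $L,h$ be positive integers with $h\le L/3$. Let $k$ be the number of nodes $b\in[N]\setminus\{a\}$ for which there exists a path in $G$ from $(a,t)$ to some vertex $(b,t')$ with $t'-t\le L$ that contains at most $h$ physical edges. Then $k\le 2\binom{L}{h}$.
   Context: A connection schedule of size $N$ and period $T\ge1$ is a sequence of permutations $\pi_0,\dots,\pi_{T-1}$ of $[N]=\{1,\dots,N\}$; write $\pi_t=\pi_{t\bmod T}$ for $t\in\mathbb Z$. Its virtual topology $G$ is the directed graph on $[N]\times\mathbb Z$ with virtual edges $(i,t)\to(i,t+1)$ and physical edges $(i,t)\to(\pi_t(i),t+1)$ for all $i\in[N]$, $t\in\mathbb Z$. *)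

theory Defs
  imports Main
begin

definition sched_perm :: "nat \<Rightarrow> (nat \<Rightarrow> nat \<Rightarrow> nat) \<Rightarrow> int \<Rightarrow> nat \<Rightarrow> nat" where
  "sched_perm T \<pi> t = \<pi> (nat (t mod int T))"

definition is_schedule :: "nat \<Rightarrow> nat \<Rightarrow> (nat \<Rightarrow> nat \<Rightarrow> nat) \<Rightarrow> bool" where
  "is_schedule N T \<pi> \<longleftrightarrow> T \<ge> 1 \<and> (\<forall>s<T. bij_betw (\<pi> s) {1..N} {1..N})"

definition virtual_edge :: "nat \<Rightarrow> nat \<times> int \<Rightarrow> nat \<times> int \<Rightarrow> bool" where
  "virtual_edge N v w \<longleftrightarrow> fst v \<in> {1..N} \<and> w = (fst v, snd v + 1)"

definition physical_edge :: "nat \<Rightarrow> nat \<Rightarrow> (nat \<Rightarrow> nat \<Rightarrow> nat) \<Rightarrow> nat \<times> int \<Rightarrow> nat \<times> int \<Rightarrow> bool" where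
  "physical_edge N T \<pi> v w \<longleftrightarrow> fst v \<in> {1..N} \<and> w = (sched_perm T \<pi> (snd v) (fst v), snd v + 1)"

inductive vpath :: "nat \<Rightarrow> nat \<Rightarrow> (nat \<Rightarrow> nat \<Rightarrow> nat) \<Rightarrow> nat \<times> int \<Rightarrow> nat \<times> int \<Rightarrow> nat \<Rightarrow> bool"
  for N T \<pi> where
  vpath_nil: "vpath N T \<pi> v v 0"
| vpath_virtual: "virtual_edge N v w \<Longrightarrow> vpath N T \<pi> w u k \<Longrightarrow> vpath N T \<pi> v u k"
| vpath_physical: "physical_edge N T \<pi> v w \<Longrightarrow> vpath N T \<pi> w u k \<Longrightarrow> vpath N T \<pi> v u (Suc k)"

end

theory Submission
  imports Defs
begin

fun walk :: "nat \<Rightarrow> (nat \<Rightarrow> nat \<Rightarrow> nat) \<Rightarrow> nat \<Rightarrow> int \<Rightarrow> nat set \<Rightarrow> nat \<Rightarrow> nat" where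
  "walk T \<pi> x s S 0 = x"
| "walk T \<pi> x s S (Suc n) =
     walk T \<pi> (if 0 \<in> S then sched_perm T \<pi> s x else x) (s + 1) {i. Suc i \<in> S} n"

lemma walk_empty: "walk T \<pi> x s {} m = x"
  by (induction m arbitrary: s) auto

lemma walk_ext: "S \<subseteq> {..<n} \<Longrightarrow> n \<le> m \<Longrightarrow> walk T \<pi> x s S m = walk T \<pi> x s S n"
proof (induction n arbitrary: x s S m)
  case 0
  then have "S = {}" by auto
  then show ?case by (simp add: walk_empty)
next
  case (Suc n)
  then obtain m' where m: "m = Suc m'" by (cases m) auto
  have h: "{i. Suc i \<in> S} \<subseteq> {..<n}" using Suc.prems by auto
  have nm: "n \<le> m'" using Suc.prems m by simp
  show ?case using Suc.IH[OF h nm] Suc.IH[OF h nm] m by simp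
qed

lemma vpath_walk:
  "vpath N T \<pi> v u k \<Longrightarrow> \<exists>S. snd v \<le> snd u \<and> S \<subseteq> {..<nat (snd u - snd v)} \<and> card S = k
     \<and> fst u = walk T \<pi> (fst v) (snd v) S (nat (snd u - snd v))"
proof (induction rule: vpath.induct)
  case (vpath_nil v)
  then show ?case by (intro exI[of _ "{}"]) simp
next
  case (vpath_virtual v w u k)
  then obtain S where S: "snd w \<le> snd u" "S \<subseteq> {..<nat (snd u - snd w)}" "card S = k"
     "fst u = walk T \<pi> (fst w) (snd w) S (nat (snd u - snd w))" by blast
  have w: "w = (fst v, snd v + 1)" using vpath_virtual.hyps(1) by (simp add: virtual_edge_def)
  have e: "nat (snd u - snd v) = Suc (nat (snd u - snd w))" using S(1) w by auto
  have e2: "{i. Suc i \<in> Suc ` S} = S" by auto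
  show ?case
    apply (intro exI[of _ "Suc ` S"])
    using S w e e2 by (auto simp: card_image)
next
  case (vpath_physical v w u k)
  then obtain S where S: "snd w \<le> snd u" "S \<subseteq> {..<nat (snd u - snd w)}" "card S = k"
     "fst u = walk T \<pi> (fst w) (snd w) S (nat (snd u - snd w))" by blast
  have w: "w = (sched_perm T \<pi> (snd v) (fst v), snd v + 1)" using vpath_physical.hyps(1)
    by (simp add: physical_edge_def)
  have e: "nat (snd u - snd v) = Suc (nat (snd u - snd w))" using S(1) w by auto
  have e2: "{i. Suc i \<in> insert 0 (Suc ` S)} = S" by auto
  have fin: "finite S" using S(2) finite_subset by blast
  have c: "card (insert 0 (Suc ` S)) = Suc k" using fin S(3) by (auto simp: card_image)
  show ?case
    apply (intro exI[of _ "insert 0 (Suc ` S)"])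
    using S w e e2 c by auto
qed

lemma chid: "Suc j * (L choose Suc j) = (L - j) * (L choose j)"
  by (metis left_diff_distrib inf_period(1) binomial_absorption binomial_absorb_comp)

lemma sum_bound: "3 * h \<le> L \<Longrightarrow> j \<le> h \<Longrightarrow> (\<Sum>i\<le>j. L choose i) \<le> 2 * (L choose j)"
proof (induction j)
  case 0
  then show ?case by simp
next
  case (Suc j)
  have "Suc j * (L choose Suc j) = (L - j) * (L choose j)" by (rule chid)
  moreover have "L - j \<ge> 2 * Suc j" using Suc.prems by simp
  ultimately have "Suc j * (L choose Suc j) \<ge> Suc j * (2 * (L choose j))"
    by (metis mult.assoc mult.commute mult_le_mono1)
  then have "2 * (L choose j) \<le> L choose Suc j" by (meson Suc_le_mono mult_le_cancel1 zero_less_Suc le_refl mult_le_mono2 nat_mult_le_cancel_disj)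
  then show ?case using Suc by simp
qed

lemma n_sub: "card {S. S \<subseteq> {..<(L::nat)} \<and> card S = j} = L choose j"
  using n_subsets[of "{..<L}" j] by simp

theorem lemma3p1:
  fixes N T L h a :: nat and \<pi> :: "nat \<Rightarrow> nat \<Rightarrow> nat" and t :: int
  assumes "is_schedule N T \<pi>"
    and "a \<in> {1..N}"
    and "L > 0" and "h > 0" and "3 * h \<le> L"
  shows "card {b \<in> {1..N} - {a}. \<exists>t' j. t' - t \<le> int L \<and> j \<le> h
             \<and> vpath N T \<pi> (a, t) (b, t') j} \<le> 2 * (L choose h)"
proof -
  let ?A = "{b \<in> {1..N} - {a}. \<exists>t' j. t' - t \<le> int L \<and> j \<le> h
             \<and> vpath N T \<pi> (a, t) (b, t') j}"
  let ?F = "\<lambda>j. {S. S \<subseteq> {..<L} \<and> card S = j}"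
  let ?B = "\<Union>j\<le>h. ?F j"
  have sub: "?A \<subseteq> (\<lambda>S. walk T \<pi> a t S L) ` ?B"
  proof
    fix b assume "b \<in> ?A"
    then obtain t' j where tj: "t' - t \<le> int L" "j \<le> h" "vpath N T \<pi> (a, t) (b, t') j" by blast
    from vpath_walk[OF tj(3)] obtain S where S: "t \<le> t'" "S \<subseteq> {..<nat (t' - t)}" "card S = j"
      "b = walk T \<pi> a t S (nat (t' - t))" by auto
    have le: "nat (t' - t) \<le> L" using tj(1) by linarith
    have "b = walk T \<pi> a t S L" using walk_ext[OF S(2) le] S(4) by simp
    moreover have "S \<in> ?B" using S(2,3) tj(2) le by auto
    ultimately show "b \<in> (\<lambda>S. walk T \<pi> a t S L) ` ?B" by blast
  qed
  have finB: "finite ?B" by (auto intro: finite_subset[of _ "Pow {..<L}"])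
  have "card ?A \<le> card ((\<lambda>S. walk T \<pi> a t S L) ` ?B)"
    using sub finB by (intro card_mono) auto
  also have "\<dots> \<le> card ?B" by (rule card_image_le[OF finB])
  also have "\<dots> \<le> (\<Sum>j\<le>h. card (?F j))" by (rule card_UN_le) simp
  also have "\<dots> = (\<Sum>j\<le>h. L choose j)" by (simp add: n_sub)
  also have "\<dots> \<le> 2 * (L choose h)" using sum_bound[OF assms(5) order_refl] .
  finally show ?thesis .
qed

end
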